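(* Let $(q_i,k_i,v_i)_{i=1}^n$ be vectors in $\mathbb{R}^d$, $A_{ij}=\exp(\langle q_i,k_j\rangle/\sqrt d)$, $V\in\mathbb{R}^{n\times d}$ with rows $v_i^\top$, $D=\mathrm{diag}(A\mathbf{1}_n)$, let $I_{\mathrm{out}}\subseteq[n]$ be nonempty with $|I_{\mathrm{out}}|=n_{\mathrm{out}}$, and define $\hat A=\frac{n}{n_{\mathrm{out}}}\big(A_{ij}\mathbf{1}\{j\in I_{\mathrm{out}}\}\big)_{i,j=1}^n$ and $\hat D=\mathrm{diag}(\hat A\mathbf{1}_n)$. Then $$\|\hat D^{-1}\hat AV-D^{-1}AV\|_{\max}\le\min\Big(\big\|(\tfrac1nD)^{-1}\big\|_{\max},\big\|(\tfrac1n\hat D)^{-1}\big\|_{\max}\Big)\Big(\frac1n\|\hat AV-AV\|_{\max}+\frac1n\|A\mathbf{1}_n-\hat A\mathbf{1}_n\|_\infty\|V\|_{\max}\Big).$$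
   Context: $\|M\|_{\max}$ denotes the largest absolute entry of a matrix $M$ and $\|\cdot\|_\infty$ the largest absolute entry of a vector. *)

theory Defs
  imports "HOL-Analysis.Analysis"
begin

definition maxnorm :: "real^'m^'n \<Rightarrow> real" where
  "maxnorm M = Max (range (\<lambda>(i, j). \<bar>M $ i $ j\<bar>))"

definition vinfnorm :: "real^'n \<Rightarrow> real" where
  "vinfnorm x = Max (range (\<lambda>i. \<bar>x $ i\<bar>))"

definition diag_mat :: "real^'n \<Rightarrow> real^'n^'n" where
  "diag_mat x = (\<chi> i j. if i = j then x $ i else 0)"

end

theory Submission
  imports Defs
begin

lemma minv_unique:
  fixes M E :: "real^'n^'n"
  assumes "M ** E = mat 1" "E ** M = mat 1"
  shows "matrix_inv M = E"
proof -
  have ex: "\<exists>F. M ** F = mat 1 \<and> F ** M = mat 1" using assms by blast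
  define F where "F = matrix_inv M"
  have F: "M ** F = mat 1 \<and> F ** M = mat 1"
    unfolding F_def matrix_inv_def by (rule someI_ex[OF ex])
  have "F = F ** (M ** E)" using assms by (simp add: matrix_mul_rid)
  also have "\<dots> = (F ** M) ** E" by (simp add: matrix_mul_assoc)
  also have "\<dots> = E" using F by (simp add: matrix_mul_lid)
  finally show ?thesis unfolding F_def .
qed

lemma diag_mul: "(diag_mat x ** M) $ i $ j = x $ i * M $ i $ j"
proof -
  have "(diag_mat x ** M) $ i $ j = (\<Sum>k\<in>UNIV. (if i = k then x $ i else 0) * M $ k $ j)"
    by (simp add: matrix_matrix_mult_def diag_mat_def)
  also have "\<dots> = (\<Sum>k\<in>UNIV. if i = k then x $ i * M $ i $ j else 0)"
    by (rule sum.cong) auto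
  also have "\<dots> = x $ i * M $ i $ j" by simp
  finally show ?thesis .
qed

lemma diag_inv:
  fixes x :: "real^'n"
  assumes "\<And>i. x $ i \<noteq> 0"
  shows "matrix_inv (diag_mat x) = diag_mat (\<chi> i. 1 / x $ i)"
  apply (rule minv_unique)
  using assms by (simp_all add: vec_eq_iff diag_mul) (auto simp: mat_def diag_mat_def)

lemma scale_diag: "c *\<^sub>R diag_mat x = diag_mat (c *\<^sub>R x)"
  by (auto simp: vec_eq_iff diag_mat_def)

lemma maxnorm_ge: "\<bar>M $ i $ j\<bar> \<le> maxnorm M"
  unfolding maxnorm_def by (rule Max_ge) (auto intro!: image_eqI[where x="(i,j)"])

lemma maxnorm_le: "(\<And>i j. \<bar>M $ i $ j\<bar> \<le> B) \<Longrightarrow> maxnorm M \<le> B"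
  unfolding maxnorm_def by (subst Max_le_iff) auto

lemma vinfnorm_ge: "\<bar>x $ i\<bar> \<le> vinfnorm x"
  unfolding vinfnorm_def by (rule Max_ge) auto

lemma maxnorm_diag_ge: "\<bar>x $ i\<bar> \<le> maxnorm (diag_mat x)"
  using maxnorm_ge[of "diag_mat x" i i] by (simp add: diag_mat_def)

lemma scalar_key:
  fixes X Y a b n E F W :: real
  assumes a: "a > 0" and b: "b > 0" and n: "n > 0"
    and E: "\<bar>X - Y\<bar> \<le> E" and F: "\<bar>a - b\<bar> \<le> F" and W: "W \<ge> 0"
    and Y: "\<bar>Y\<bar> \<le> a * W" and X: "\<bar>X\<bar> \<le> b * W"
  shows "\<bar>X / b - Y / a\<bar> \<le> min (n / a) (n / b) * ((1/n) * E + (1/n) * F * W)"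
proof -
  have e1: "X / b - Y / a = (X - Y) / b + (Y / a) * (a - b) / b"
    using a b by (simp add: field_simps)
  have e2: "X / b - Y / a = (X - Y) / a + (X / b) * (a - b) / a"
    using a b by (simp add: field_simps)
  have ya: "\<bar>Y / a\<bar> \<le> W" using Y a by (simp add: abs_divide divide_le_eq mult.commute)
  have xb: "\<bar>X / b\<bar> \<le> W" using X b by (simp add: abs_divide divide_le_eq mult.commute)
  have p1: "\<bar>(Y / a) * (a - b)\<bar> \<le> W * F"
    unfolding abs_mult by (rule mult_mono) (use ya F W in auto)
  have p2: "\<bar>(X / b) * (a - b)\<bar> \<le> W * F"
    unfolding abs_mult by (rule mult_mono) (use xb F W in auto)
  have B: "\<bar>X / b - Y / a\<bar> \<le> (E + W * F) / b"
  proof -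
    have "\<bar>X / b - Y / a\<bar> \<le> \<bar>(X - Y) / b\<bar> + \<bar>(Y / a) * (a - b) / b\<bar>"
      unfolding e1 by (rule abs_triangle_ineq)
    also have "\<bar>(X - Y) / b\<bar> \<le> E / b" using E b by (simp add: abs_divide divide_right_mono)
    also have "\<bar>(Y / a) * (a - b) / b\<bar> \<le> (W * F) / b"
      using p1 b by (simp only: abs_divide abs_of_pos) (rule divide_right_mono, auto)
    finally show ?thesis by (simp add: add_divide_distrib)
  qed
  have A: "\<bar>X / b - Y / a\<bar> \<le> (E + W * F) / a"
  proof -
    have "\<bar>X / b - Y / a\<bar> \<le> \<bar>(X - Y) / a\<bar> + \<bar>(X / b) * (a - b) / a\<bar>"
      unfolding e2 by (rule abs_triangle_ineq)
    also have "\<bar>(X - Y) / a\<bar> \<le> E / a" using E a by (simp add: abs_divide divide_right_mono)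
    also have "\<bar>(X / b) * (a - b) / a\<bar> \<le> (W * F) / a"
      using p2 a by (simp only: abs_divide abs_of_pos) (rule divide_right_mono, auto)
    finally show ?thesis by (simp add: add_divide_distrib)
  qed
  have r: "(1/n) * E + (1/n) * F * W = (E + W * F) / n" by (simp add: add_divide_distrib mult.commute)
  show ?thesis
  proof (cases "a \<le> b")
    case True
    then have "n / b \<le> n / a" using a n by (simp add: frac_le)
    then have m: "min (n / a) (n / b) = n / b" by simp
    show ?thesis unfolding m r using B n by simp
  next
    case False
    then have "n / a \<le> n / b" using b n by (simp add: frac_le)
    then have m: "min (n / a) (n / b) = n / a" by simp
    show ?thesis unfolding m r using A n by simp
  qed
qed

lemma rowbound:
  fixes M :: "real^'n^'n" and V :: "real^'d^'n"
  assumes "\<And>j. M $ i $ j \<ge> 0"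
  shows "\<bar>(M ** V) $ i $ l\<bar> \<le> (M *v (\<chi> i. 1)) $ i * maxnorm V"
proof -
  have "\<bar>(M ** V) $ i $ l\<bar> = \<bar>\<Sum>j\<in>UNIV. M $ i $ j * V $ j $ l\<bar>"
    by (simp add: matrix_matrix_mult_def)
  also have "\<dots> \<le> (\<Sum>j\<in>UNIV. \<bar>M $ i $ j * V $ j $ l\<bar>)" by (rule sum_abs)
  also have "\<dots> \<le> (\<Sum>j\<in>UNIV. M $ i $ j * maxnorm V)"
    apply (rule sum_mono)
    using assms maxnorm_ge[of V] by (simp add: abs_mult mult_left_mono)
  also have "\<dots> = (M *v (\<chi> i. 1)) $ i * maxnorm V"
    by (simp add: matrix_vector_mult_def sum_distrib_right)
  finally show ?thesis .
qed

theorem lemmaF1: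
  fixes q k v :: "'n::finite \<Rightarrow> real^'d::finite"
    and A Ahat D Dhat :: "real^'n^'n"
    and V :: "real^'d^'n"
    and Iout :: "'n set"
  assumes A_def: "A = (\<chi> i j. exp ((q i \<bullet> k j) / sqrt (real CARD('d))))"
    and V_def: "V = (\<chi> i. v i)"
    and D_def: "D = diag_mat (A *v (\<chi> i. 1))"
    and Iout_ne: "Iout \<noteq> {}"
    and Ahat_def: "Ahat = (real CARD('n) / real (card Iout)) *\<^sub>R
                     (\<chi> i j. if j \<in> Iout then A $ i $ j else 0)"
    and Dhat_def: "Dhat = diag_mat (Ahat *v (\<chi> i. 1))"
  shows "maxnorm (matrix_inv Dhat ** Ahat ** V - matrix_inv D ** A ** V)
    \<le> min (maxnorm (matrix_inv ((1 / real CARD('n)) *\<^sub>R D)))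
            (maxnorm (matrix_inv ((1 / real CARD('n)) *\<^sub>R Dhat)))
        * ((1 / real CARD('n)) * maxnorm (Ahat ** V - A ** V)
           + (1 / real CARD('n)) * vinfnorm (A *v (\<chi> i. 1) - Ahat *v (\<chi> i. 1)) * maxnorm V)"
proof -
  define N where "N = real CARD('n)"
  define a where "a = A *v (\<chi> i. 1)"
  define b where "b = Ahat *v (\<chi> i. 1)"
  define c where "c = real CARD('n) / real (card Iout)"
  have N: "N > 0" unfolding N_def by simp
  have cardI: "card Iout > 0" using Iout_ne by (simp add: card_gt_0_iff)
  have c: "c > 0" unfolding c_def using cardI by simp
  obtain j0 where j0: "j0 \<in> Iout" using Iout_ne by blast
  have Apos: "A $ i $ j > 0" for i j unfolding A_def by simp
  have Ahat_e: "Ahat $ i $ j = c * (if j \<in> Iout then A $ i $ j else 0)" for i j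
    unfolding Ahat_def c_def by simp
  have Ahat_nn: "Ahat $ i $ j \<ge> 0" for i j
    unfolding Ahat_e using c Apos[of i j] by simp
  have apos: "a $ i > 0" for i
    unfolding a_def matrix_vector_mult_def using Apos by (simp add: sum_pos)
  have bpos: "b $ i > 0" for i
  proof -
    have "b $ i = (\<Sum>j\<in>UNIV. Ahat $ i $ j)" unfolding b_def matrix_vector_mult_def by simp
    also have "\<dots> > 0"
      by (rule sum_pos2[of UNIV j0]) (use Ahat_nn c Apos j0 in \<open>auto simp: Ahat_e\<close>)
    finally show ?thesis .
  qed
  have Dinv: "matrix_inv D = diag_mat (\<chi> i. 1 / a $ i)"
    unfolding D_def a_def[symmetric] using apos by (intro diag_inv) (metis less_irrefl)
  have Dhinv: "matrix_inv Dhat = diag_mat (\<chi> i. 1 / b $ i)"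
    unfolding Dhat_def b_def[symmetric] using bpos by (intro diag_inv) (metis less_irrefl)
  have D1: "matrix_inv ((1 / real CARD('n)) *\<^sub>R D) = diag_mat (\<chi> i. 1 / (((1 / N) *\<^sub>R a) $ i))"
    unfolding D_def a_def[symmetric] scale_diag N_def[symmetric]
    using apos N by (intro diag_inv) (simp add: less_imp_neq[symmetric])
  have Dh1: "matrix_inv ((1 / real CARD('n)) *\<^sub>R Dhat) = diag_mat (\<chi> i. 1 / (((1 / N) *\<^sub>R b) $ i))"
    unfolding Dhat_def b_def[symmetric] scale_diag N_def[symmetric]
    using bpos N by (intro diag_inv) (simp add: less_imp_neq[symmetric])
  define M1 where "M1 = maxnorm (matrix_inv ((1 / real CARD('n)) *\<^sub>R D))"
  define M2 where "M2 = maxnorm (matrix_inv ((1 / real CARD('n)) *\<^sub>R Dhat))"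
  have M1: "N / a $ i \<le> M1" for i
    using maxnorm_diag_ge[of "\<chi> i. 1 / (((1 / N) *\<^sub>R a) $ i)" i] apos[of i] N
    unfolding M1_def D1 by simp
  have M2: "N / b $ i \<le> M2" for i
    using maxnorm_diag_ge[of "\<chi> i. 1 / (((1 / N) *\<^sub>R b) $ i)" i] bpos[of i] N
    unfolding M2_def Dh1 by simp
  define E where "E = maxnorm (Ahat ** V - A ** V)"
  define F where "F = vinfnorm (A *v (\<chi> i. 1) - Ahat *v (\<chi> i. 1))"
  define W where "W = maxnorm V"
  have W: "W \<ge> 0" unfolding W_def using maxnorm_ge[of V] by (meson abs_ge_zero order_trans)
  have E: "E \<ge> 0" unfolding E_def using maxnorm_ge[of "Ahat ** V - A ** V"] by (meson abs_ge_zero order_trans)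
  have F: "F \<ge> 0" unfolding F_def using vinfnorm_ge[of "A *v (\<chi> i. 1) - Ahat *v (\<chi> i. 1)"] by (meson abs_ge_zero order_trans)
  have fac: "(1/N) * E + (1/N) * F * W \<ge> 0" using N E F W by simp
  have main: "maxnorm (matrix_inv Dhat ** Ahat ** V - matrix_inv D ** A ** V)
     \<le> min M1 M2 * ((1/N) * E + (1/N) * F * W)"
  proof (rule maxnorm_le)
    fix i l
    have L: "(matrix_inv Dhat ** Ahat ** V - matrix_inv D ** A ** V) $ i $ l
        = (Ahat ** V) $ i $ l / b $ i - (A ** V) $ i $ l / a $ i"
      unfolding Dinv Dhinv by (simp add: matrix_mul_assoc[symmetric] diag_mul)
    have "\<bar>(Ahat ** V) $ i $ l / b $ i - (A ** V) $ i $ l / a $ i\<bar>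
        \<le> min (N / a $ i) (N / b $ i) * ((1/N) * E + (1/N) * F * W)"
    proof (rule scalar_key[OF apos bpos N _ _ W])
      show "\<bar>(Ahat ** V) $ i $ l - (A ** V) $ i $ l\<bar> \<le> E"
        unfolding E_def using maxnorm_ge[of "Ahat ** V - A ** V" i l] by simp
      show "\<bar>a $ i - b $ i\<bar> \<le> F"
        unfolding F_def a_def b_def using vinfnorm_ge[of "A *v (\<chi> i. 1) - Ahat *v (\<chi> i. 1)" i] by simp
      show "\<bar>(A ** V) $ i $ l\<bar> \<le> a $ i * W"
        unfolding a_def W_def by (rule rowbound) (use Apos in \<open>simp add: less_imp_le\<close>)
      show "\<bar>(Ahat ** V) $ i $ l\<bar> \<le> b $ i * W"
        unfolding b_def W_def by (rule rowbound) (use Ahat_nn in simp)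
    qed
    also have "\<dots> \<le> min M1 M2 * ((1/N) * E + (1/N) * F * W)"
      by (rule mult_right_mono[OF _ fac]) (use M1[of i] M2[of i] in linarith)
    finally show "\<bar>(matrix_inv Dhat ** Ahat ** V - matrix_inv D ** A ** V) $ i $ l\<bar>
        \<le> min M1 M2 * ((1/N) * E + (1/N) * F * W)" unfolding L .
  qed
  then show ?thesis unfolding M1_def M2_def E_def F_def W_def N_def .
qed

end
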